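(* Let $(X,Y)\sim P_{X,Y}$ be random variables in $\{0,1\}\times\mathcal{Y}$, $\mathcal{Y}=\{1,\dots,|\mathcal{Y}|\}$, let $p_y=\mathbb{P}(X=0|Y=y)$ and assume $p_1\le\cdots\le p_{|\mathcal{Y}|}$. For $i\in\{2,\dots,|\mathcal{Y}|-1\}$ let $\alpha_i\in[0,1]$ satisfy $\alpha_ip_{i-1}+(1-\alpha_i)p_{i+1}=p_i$, and define the joint distribution $P^i_{Y,Z,X}=P_YP^i_{Z|Y}P^i_{X|Z}$ on $\mathcal{Y}\times(\mathcal{Y}\setminus\{i\})\times\{0,1\}$ by $P^i_{Z|Y}(z|y)=1$ if $y\neq i, z=y$; $=\alpha_i$ if $y=i,z=i-1$; $=1-\alpha_i$ if $y=i,z=i+1$; $=0$ otherwise; and $P^i_{X|Z}(0|z)=p_z$. Then under $P^i_{Y,Z,X}$, $X-Z-Y$ form a Markov chain in this order, $P^i_{X,Y}=P_{X,Y}$, and \[ I(X;Z)-I(X;Y)=P_Y(i)\big[h_2(\alpha_ip_{i-1}+(1-\alpha_i)p_{i+1})-\alpha_ih_2(p_{i-1})-(1-\alpha_i)h_2(p_{i+1})\big]. \]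
   Context: $h_2(p)=-p\log p-(1-p)\log(1-p)$ is the binary entropy function; logarithms are natural. *)

theory Defs
  imports Complex_Main
begin

definition nlogn :: "real \<Rightarrow> real" where
  "nlogn x = (if x = 0 then 0 else - x * ln x)"

definition h2 :: "real \<Rightarrow> real" where
  "h2 q = nlogn q + nlogn (1 - q)"

definition mutual_info :: "'a set \<Rightarrow> 'b set \<Rightarrow> ('a \<Rightarrow> 'b \<Rightarrow> real) \<Rightarrow> real" where
  "mutual_info A B J =
     (\<Sum>u\<in>A. \<Sum>v\<in>B. if J u v = 0 then 0
        else J u v * ln (J u v / ((\<Sum>v'\<in>B. J u v') * (\<Sum>u'\<in>A. J u' v))))"

text \<open>U - V - W is a Markov chain under the joint pmf J u v w on A x B x C:
  U and W are conditionally independent given V, i.e.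
  P(u,v,w) P(v) = P(u,v) P(v,w).\<close>
definition markov_chain :: "'a set \<Rightarrow> 'b set \<Rightarrow> 'c set \<Rightarrow> ('a \<Rightarrow> 'b \<Rightarrow> 'c \<Rightarrow> real) \<Rightarrow> bool" where
  "markov_chain A B C J \<longleftrightarrow>
     (\<forall>u\<in>A. \<forall>v\<in>B. \<forall>w\<in>C.
        J u v w * (\<Sum>u'\<in>A. \<Sum>w'\<in>C. J u' v w') = (\<Sum>w'\<in>C. J u v w') * (\<Sum>u'\<in>A. J u' v w))"

definition PZgY :: "nat \<Rightarrow> real \<Rightarrow> nat \<Rightarrow> nat \<Rightarrow> real" where
  "PZgY i \<alpha> z y =
     (if y \<noteq> i \<and> z = y then 1
      else if y = i \<and> z = i - 1 then \<alpha>
      else if y = i \<and> z = i + 1 then 1 - \<alpha>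
      else 0)"

definition PXgZ :: "(nat \<Rightarrow> real) \<Rightarrow> nat \<Rightarrow> nat \<Rightarrow> real" where
  "PXgZ p x z = (if x = 0 then p z else 1 - p z)"

end

theory Submission
  imports Defs
begin

definition xlnx :: "real \<Rightarrow> real" where "xlnx x = x * ln x"

lemma xlnx_mult: "xlnx (a * b) = a * xlnx b + b * xlnx a"
  by (auto simp: xlnx_def ln_mult algebra_simps)

lemma nlogn_xlnx: "nlogn x = - xlnx x"
  by (simp add: nlogn_def xlnx_def)

lemma col_h2: "xlnx (q * r) + xlnx (q * (1 - r)) - xlnx q = - q * h2 r"
  unfolding h2_def nlogn_xlnx xlnx_mult by (simp add: algebra_simps)

lemma mi_decomp:
  fixes J :: "'a \<Rightarrow> 'b \<Rightarrow> real"
  assumes fA: "finite A" and fB: "finite B" and nn: "\<And>u v. u \<in> A \<Longrightarrow> v \<in> B \<Longrightarrow> J u v \<ge> 0"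
  shows "mutual_info A B J = (\<Sum>u\<in>A. \<Sum>v\<in>B. xlnx (J u v))
          - (\<Sum>u\<in>A. xlnx (\<Sum>v\<in>B. J u v)) - (\<Sum>v\<in>B. xlnx (\<Sum>u\<in>A. J u v))"
proof -
  have term_eq: "(if J u v = 0 then 0 else J u v * ln (J u v / ((\<Sum>v'\<in>B. J u v') * (\<Sum>u'\<in>A. J u' v))))
      = xlnx (J u v) - J u v * ln (\<Sum>v'\<in>B. J u v') - J u v * ln (\<Sum>u'\<in>A. J u' v)"
    if u: "u \<in> A" and v: "v \<in> B" for u v
  proof (cases "J u v = 0")
    case True then show ?thesis by (simp add: xlnx_def)
  next
    case False
    have r: "J u v \<le> (\<Sum>v'\<in>B. J u v')"
      using member_le_sum[of v B "J u"] fB v nn u by auto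
    have s: "J u v \<le> (\<Sum>u'\<in>A. J u' v)"
      using member_le_sum[of u A "\<lambda>u'. J u' v"] fA u nn v by auto
    have pos: "J u v > 0" using nn[OF u v] False by auto
    have "ln (J u v / ((\<Sum>v'\<in>B. J u v') * (\<Sum>u'\<in>A. J u' v)))
        = ln (J u v) - ln (\<Sum>v'\<in>B. J u v') - ln (\<Sum>u'\<in>A. J u' v)"
      using r s pos by (simp add: ln_div ln_mult)
    note L = this
    show ?thesis using False unfolding xlnx_def L by (simp add: right_diff_distrib)
  qed
  have "mutual_info A B J = (\<Sum>u\<in>A. \<Sum>v\<in>B. xlnx (J u v) - J u v * ln (\<Sum>v'\<in>B. J u v') - J u v * ln (\<Sum>u'\<in>A. J u' v))"
    unfolding mutual_info_def by (intro sum.cong refl) (simp add: term_eq)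
  also have "\<dots> = (\<Sum>u\<in>A. \<Sum>v\<in>B. xlnx (J u v)) - (\<Sum>u\<in>A. \<Sum>v\<in>B. J u v * ln (\<Sum>v'\<in>B. J u v'))
      - (\<Sum>u\<in>A. \<Sum>v\<in>B. J u v * ln (\<Sum>u'\<in>A. J u' v))"
    by (simp add: sum_subtractf)
  also have "(\<Sum>u\<in>A. \<Sum>v\<in>B. J u v * ln (\<Sum>v'\<in>B. J u v')) = (\<Sum>u\<in>A. xlnx (\<Sum>v\<in>B. J u v))"
    by (simp add: xlnx_def sum_distrib_right)
  also have "(\<Sum>u\<in>A. \<Sum>v\<in>B. J u v * ln (\<Sum>u'\<in>A. J u' v)) = (\<Sum>v\<in>B. xlnx (\<Sum>u\<in>A. J u v))"
    by (subst sum.swap) (simp add: xlnx_def sum_distrib_right)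
  finally show ?thesis .
qed

theorem proposition1:
  fixes m i :: nat and PXY :: "nat \<Rightarrow> nat \<Rightarrow> real" and p :: "nat \<Rightarrow> real" and \<alpha> :: real
  assumes PXY_nonneg: "\<forall>x\<in>{0,1}. \<forall>y\<in>{1..m}. PXY x y \<ge> 0"
    and PXY_sum: "(\<Sum>x\<in>{0,1}. \<Sum>y\<in>{1..m}. PXY x y) = 1"
    and p_range: "\<forall>y\<in>{1..m}. 0 \<le> p y \<and> p y \<le> 1"
    and p_cond: "\<forall>y\<in>{1..m}. PXY 0 y = p y * (PXY 0 y + PXY 1 y)"
    and p_mono: "\<forall>y\<in>{1..m}. \<forall>y'\<in>{1..m}. y \<le> y' \<longrightarrow> p y \<le> p y'"
    and i_range: "2 \<le> i" "i \<le> m - 1"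
    and alpha_range: "0 \<le> \<alpha>" "\<alpha> \<le> 1"
    and alpha_eq: "\<alpha> * p (i - 1) + (1 - \<alpha>) * p (i + 1) = p i"
  shows
    "let PY = (\<lambda>y. PXY 0 y + PXY 1 y);
         J = (\<lambda>y z x. PY y * PZgY i \<alpha> z y * PXgZ p x z);
         Zs = {1..m} - {i}
     in markov_chain {0,1} Zs {1..m} (\<lambda>x z y. J y z x)
        \<and> (\<forall>x\<in>{0,1}. \<forall>y\<in>{1..m}. (\<Sum>z\<in>Zs. J y z x) = PXY x y)
        \<and> mutual_info {0,1} Zs (\<lambda>x z. \<Sum>y\<in>{1..m}. J y z x)
            - mutual_info {0,1} {1..m} PXY
          = PY i * (h2 (\<alpha> * p (i - 1) + (1 - \<alpha>) * p (i + 1))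
                    - \<alpha> * h2 (p (i - 1)) - (1 - \<alpha>) * h2 (p (i + 1)))"
proof -
  define PY where "PY = (\<lambda>y. PXY 0 y + PXY 1 y)"
  define J where "J = (\<lambda>y z x. PY y * PZgY i \<alpha> z y * PXgZ p x z)"
  define Zs where "Zs = {1..m} - {i}"
  define qz where "qz = (\<lambda>z. \<Sum>y\<in>{1..m}. PY y * PZgY i \<alpha> z y)"
  have PY_nn: "PY y \<ge> 0" if "y \<in> {1..m}" for y
    using PXY_nonneg that unfolding PY_def by force
  have PXY0: "PXY 0 y = PY y * p y" if "y \<in> {1..m}" for y
    using p_cond that unfolding PY_def by (auto simp: algebra_simps)
  have PXY1: "PXY 1 y = PY y * (1 - p y)" if "y \<in> {1..m}" for y
    using PXY0[OF that] unfolding PY_def by (auto simp: algebra_simps)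
  have im: "i - 1 \<in> Zs" "i + 1 \<in> Zs" "i - 1 \<noteq> i + 1" "i \<in> {1..m}"
    using i_range unfolding Zs_def by auto
  have fZ: "finite Zs" unfolding Zs_def by simp
  have Zsub: "Zs \<subseteq> {1..m}" unfolding Zs_def by auto
  have PZ_off: "PZgY i \<alpha> z y = (if z = y then 1 else 0)" if "y \<noteq> i" for z y
    using that by (simp add: PZgY_def)
  have PZ_i: "PZgY i \<alpha> z i = (if z = i - 1 then \<alpha> else if z = i + 1 then 1 - \<alpha> else 0)" for z
    by (simp add: PZgY_def)
  have markov: "markov_chain {0,1} Zs {1..m} (\<lambda>x z y. J y z x)"
  proof -
    define g where "g = (\<lambda>z y. PY y * PZgY i \<alpha> z y)"
    have Jg: "J y z x = g z y * PXgZ p x z" for y z x unfolding J_def g_def by simp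
    have tot: "(\<Sum>u'\<in>{0::nat,1}. \<Sum>w'\<in>{1..m}. J w' v u') = (\<Sum>w'\<in>{1..m}. g v w')" for v
    proof -
      have "(\<Sum>u'\<in>{0::nat,1}. \<Sum>w'\<in>{1..m}. J w' v u') = (\<Sum>w'\<in>{1..m}. g v w' * p v) + (\<Sum>w'\<in>{1..m}. g v w' * (1 - p v))"
        by (simp add: Jg PXgZ_def)
      also have "\<dots> = (\<Sum>w'\<in>{1..m}. g v w')"
        by (simp add: sum.distrib[symmetric] algebra_simps)
      finally show ?thesis .
    qed
    have part: "(\<Sum>u'\<in>{0::nat,1}. J w v u') = g v w" for v w
      by (simp add: Jg PXgZ_def algebra_simps)
    show ?thesis unfolding markov_chain_def tot part
      by (simp add: Jg sum_distrib_left sum_distrib_right algebra_simps)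
  qed
  have qz_Zs: "qz z = PY z + PY i * PZgY i \<alpha> z i" if z: "z \<in> Zs" for z
  proof -
    have "qz z = PY i * PZgY i \<alpha> z i + (\<Sum>y\<in>{1..m} - {i}. PY y * PZgY i \<alpha> z y)"
      unfolding qz_def using im(4) by (simp add: sum.remove)
    also have "(\<Sum>y\<in>{1..m} - {i}. PY y * PZgY i \<alpha> z y) = (\<Sum>y\<in>{1..m} - {i}. if y = z then PY y else 0)"
      by (intro sum.cong refl) (auto simp: PZ_off)
    also have "\<dots> = PY z" using z unfolding Zs_def by (simp add: sum.delta)
    finally show ?thesis by simp
  qed
  have marg: "(\<Sum>z\<in>Zs. J y z x) = PXY x y" if x: "x \<in> {0,1}" and y: "y \<in> {1..m}" for x y
  proof (cases "y = i")
    case True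
    have "(\<Sum>z\<in>Zs. J y z x) = (\<Sum>z\<in>Zs. (if z = i - 1 then PY i * \<alpha> * PXgZ p x (i - 1) else 0)
          + (if z = i + 1 then PY i * (1 - \<alpha>) * PXgZ p x (i + 1) else 0))"
      unfolding J_def True by (intro sum.cong refl) (auto simp: PZ_i)
    also have "\<dots> = PY i * \<alpha> * PXgZ p x (i - 1) + PY i * (1 - \<alpha>) * PXgZ p x (i + 1)"
      using im fZ by (simp add: sum.distrib sum.delta)
    also have "\<dots> = PXY x y"
    proof -
      have A: "PY i * \<alpha> * p (i - 1) + PY i * (1 - \<alpha>) * p (i + 1) = PY i * p i"
        using alpha_eq by (metis distrib_left mult.assoc)
      have B: "PY i * \<alpha> * (1 - p (i - 1)) + PY i * (1 - \<alpha>) * (1 - p (i + 1)) = PY i * (1 - p i)"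
        using A by (simp add: algebra_simps)
      show ?thesis using x A B PXY0[OF im(4)] PXY1[OF im(4)] True
        by (auto simp: PXgZ_def)
    qed
    finally show ?thesis .
  next
    case False
    have "(\<Sum>z\<in>Zs. J y z x) = (\<Sum>z\<in>Zs. if z = y then PY y * PXgZ p x y else 0)"
      unfolding J_def by (intro sum.cong refl) (auto simp: PZ_off[OF False])
    also have "\<dots> = PY y * PXgZ p x y" using y False unfolding Zs_def by (simp add: sum.delta)
    also have "\<dots> = PXY x y" using x PXY0[OF y] PXY1[OF y] by (auto simp: PXgZ_def)
    finally show ?thesis .
  qed
  define Q where "Q = (\<lambda>x z. \<Sum>y\<in>{1..m}. J y z x)"
  have Qeq: "Q x z = qz z * PXgZ p x z" for x z
    unfolding Q_def qz_def J_def by (simp add: sum_distrib_right)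
  have PZ_nn: "PZgY i \<alpha> z y \<ge> 0" for z y
    using alpha_range by (simp add: PZgY_def)
  have qz_nn: "qz z \<ge> 0" for z
    unfolding qz_def using PY_nn PZ_nn by (intro sum_nonneg) auto
  have Q_nn: "Q x z \<ge> 0" if "x \<in> {0,1}" "z \<in> Zs" for x z
    using Zsub that p_range qz_nn[of z] unfolding Qeq by (auto simp: PXgZ_def)
  have IZ: "mutual_info {0,1} Zs Q = (\<Sum>u\<in>{0,1}. \<Sum>v\<in>Zs. xlnx (Q u v))
          - (\<Sum>u\<in>{0,1}. xlnx (\<Sum>v\<in>Zs. Q u v)) - (\<Sum>v\<in>Zs. xlnx (\<Sum>u\<in>{0,1}. Q u v))"
    by (rule mi_decomp) (auto simp: Zs_def intro: Q_nn)
  have IY: "mutual_info {0,1} {1..m} PXY = (\<Sum>u\<in>{0,1}. \<Sum>v\<in>{1..m}. xlnx (PXY u v))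
          - (\<Sum>u\<in>{0,1}. xlnx (\<Sum>v\<in>{1..m}. PXY u v)) - (\<Sum>v\<in>{1..m}. xlnx (\<Sum>u\<in>{0,1}. PXY u v))"
    by (rule mi_decomp) (use PXY_nonneg in auto)
  have rows: "(\<Sum>v\<in>Zs. Q u v) = (\<Sum>v\<in>{1..m}. PXY u v)" if "u \<in> {0,1}" for u
  proof -
    have "(\<Sum>v\<in>Zs. Q u v) = (\<Sum>y\<in>{1..m}. \<Sum>z\<in>Zs. J y z u)"
      unfolding Q_def by (rule sum.swap)
    also have "\<dots> = (\<Sum>v\<in>{1..m}. PXY u v)" using marg that by simp
    finally show ?thesis .
  qed
  have colZ: "(\<Sum>u\<in>{0,1}. xlnx (Q u v)) - xlnx (\<Sum>u\<in>{0,1}. Q u v) = - qz v * h2 (p v)" for v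
    unfolding Qeq using col_h2[of "qz v" "p v"] by (simp add: PXgZ_def algebra_simps)
  have colY: "(\<Sum>u\<in>{0,1}. xlnx (PXY u v)) - xlnx (\<Sum>u\<in>{0,1}. PXY u v) = - PY v * h2 (p v)"
    if "v \<in> {1..m}" for v
    using col_h2[of "PY v" "p v"] PXY0[OF that] PXY1[OF that] unfolding PY_def
    by (simp add: algebra_simps)
  have "mutual_info {0,1} Zs Q - mutual_info {0,1} {1..m} PXY
      = (\<Sum>v\<in>Zs. (\<Sum>u\<in>{0,1}. xlnx (Q u v)) - xlnx (\<Sum>u\<in>{0,1}. Q u v))
        - (\<Sum>v\<in>{1..m}. (\<Sum>u\<in>{0,1}. xlnx (PXY u v)) - xlnx (\<Sum>u\<in>{0,1}. PXY u v))"
    unfolding IZ IY using rows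
    by (simp add: sum_subtractf sum.swap[of _ "{0,1}"] sum.distrib)
  also have "\<dots> = (\<Sum>v\<in>{1..m}. PY v * h2 (p v)) - (\<Sum>v\<in>Zs. qz v * h2 (p v))"
  proof -
    have "(\<Sum>v\<in>Zs. (\<Sum>u\<in>{0,1}. xlnx (Q u v)) - xlnx (\<Sum>u\<in>{0,1}. Q u v))
        - (\<Sum>v\<in>{1..m}. (\<Sum>u\<in>{0,1}. xlnx (PXY u v)) - xlnx (\<Sum>u\<in>{0,1}. PXY u v))
        = (\<Sum>v\<in>Zs. - qz v * h2 (p v)) - (\<Sum>v\<in>{1..m}. - PY v * h2 (p v))"
    proof (rule arg_cong2[where f="(-)"])
      show "(\<Sum>v\<in>Zs. (\<Sum>u\<in>{0,1}. xlnx (Q u v)) - xlnx (\<Sum>u\<in>{0,1}. Q u v)) = (\<Sum>v\<in>Zs. - qz v * h2 (p v))"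
        by (rule sum.cong[OF refl], rule colZ)
      show "(\<Sum>v\<in>{1..m}. (\<Sum>u\<in>{0,1}. xlnx (PXY u v)) - xlnx (\<Sum>u\<in>{0,1}. PXY u v)) = (\<Sum>v\<in>{1..m}. - PY v * h2 (p v))"
        by (rule sum.cong[OF refl], rule colY)
    qed
    then show ?thesis by (simp add: sum_negf)
  qed
  also have "(\<Sum>v\<in>Zs. qz v * h2 (p v)) = (\<Sum>v\<in>Zs. PY v * h2 (p v) +
        ((if v = i - 1 then PY i * \<alpha> * h2 (p (i - 1)) else 0)
       + (if v = i + 1 then PY i * (1 - \<alpha>) * h2 (p (i + 1)) else 0)))"
    by (intro sum.cong refl) (auto simp: qz_Zs PZ_i algebra_simps)
  also have "\<dots> = (\<Sum>v\<in>Zs. PY v * h2 (p v)) + PY i * \<alpha> * h2 (p (i - 1)) + PY i * (1 - \<alpha>) * h2 (p (i + 1))"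
    using im fZ by (simp add: sum.distrib sum.delta)
  also have "(\<Sum>v\<in>{1..m}. PY v * h2 (p v)) = PY i * h2 (p i) + (\<Sum>v\<in>Zs. PY v * h2 (p v))"
    unfolding Zs_def using im(4) by (simp add: sum.remove)
  finally have MI: "mutual_info {0,1} Zs Q - mutual_info {0,1} {1..m} PXY
      = PY i * (h2 (\<alpha> * p (i - 1) + (1 - \<alpha>) * p (i + 1)) - \<alpha> * h2 (p (i - 1)) - (1 - \<alpha>) * h2 (p (i + 1)))"
    using alpha_eq by (simp add: algebra_simps)
  show ?thesis
    unfolding Let_def PY_def[symmetric] J_def[symmetric] Zs_def[symmetric]
    apply (intro conjI ballI)
      apply (rule markov[unfolded J_def])
     apply (rule marg[unfolded J_def]; assumption)
    apply (rule MI[unfolded Q_def J_def])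
    done
qed

end
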